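(* Let $n\ge 4$. The pure braid group $PBr(D_n)$ is generated by the following elements of $Br(D_n)$ (writing $\mathbf k$ for the generator $y_{\alpha_k}$): (a) for $2\le i\le j\le n$: $\mathbf a_{j,i}=\mathbf j\,(\mathbf{j-1})\cdots(\mathbf{i+1})\,\mathbf i\,\mathbf i\,(\mathbf{i+1})\cdots(\mathbf{j-1})\,\mathbf j$ (so $\mathbf a_{i,i}=\mathbf i^2$); (b) $\mathbf 2'^2$ and, for $3\le j\le n$: $\mathbf a_{j,2'}=\mathbf j\,(\mathbf{j-1})\cdots\mathbf 3\,\mathbf 2'\,\mathbf 2'\,\mathbf 3\cdots(\mathbf{j-1})\,\mathbf j$; (c) for $3\le i\le j\le n$: $\mathbf b_{j,i}=\mathbf j\,(\mathbf{j-1})\cdots\mathbf 3\,\mathbf 2\,\mathbf 2'\,\mathbf 3\cdots(\mathbf{i-1})\,\mathbf i\,\mathbf i\,(\mathbf{i-1})\cdots\mathbf 3\,\mathbf 2'\,\mathbf 2\,\mathbf 3\cdots(\mathbf{j-1})\,\mathbf j$ (so for instance $\mathbf b_{j,3}=\mathbf j\cdots\mathbf 3\,\mathbf 2\,\mathbf 2'\,\mathbf 3\,\mathbf 3\,\mathbf 2'\,\mathbf 2\,\mathbf 3\cdots\mathbf j$).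
   Context: $Br(D_n)$ is the braid group of type $D_n$: generators $y_k$, $k\in\{2,2',3,\dots,n\}$, with $y_ky_l=y_ly_k$ when $k,l$ are non-adjacent and $y_ky_ly_k=y_ly_ky_l$ when adjacent, where the adjacent pairs are $\{2,3\}$, $\{2',3\}$ and $\{k,k+1\}$ for $3\le k\le n-1$ (Dynkin diagram of $D_n$ with fork nodes $2,2'$). The Weyl group $W(D_n)$ is the quotient of $Br(D_n)$ by the relations $y_k^2=1$, and $PBr(D_n)$ is the kernel of $Br(D_n)\to W(D_n)$. *)

theory Defs
  imports Main
begin

text \<open>Generators of Br(D_n): Y k stands for y_k (2 <= k <= n), Y2' for y_2'.\<close>
datatype dgen = Y nat | Y2'

text \<open>Words in the free group on the generators: a letter (g, e) is g if e = False
  and g^-1 if e = True.\<close>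
type_synonym dword = "(dgen \<times> bool) list"

definition valid_gen :: "nat \<Rightarrow> dgen \<Rightarrow> bool" where
  "valid_gen n g = (case g of Y k \<Rightarrow> 2 \<le> k \<and> k \<le> n | Y2' \<Rightarrow> True)"

definition valid_word :: "nat \<Rightarrow> dword \<Rightarrow> bool" where
  "valid_word n w = (\<forall>x \<in> set w. valid_gen n (fst x))"

text \<open>Adjacency in the Dynkin diagram of D_n: {2,3}, {2',3}, {k,k+1} for 3 <= k <= n-1.\<close>
definition adj :: "nat \<Rightarrow> dgen \<Rightarrow> dgen \<Rightarrow> bool" where
  "adj n g h = (n \<ge> 3 \<and>
     ({g, h} = {Y 2, Y 3} \<or> {g, h} = {Y2', Y 3} \<or>
      (\<exists>k. 3 \<le> k \<and> k + 1 \<le> n \<and> {g, h} = {Y k, Y (k + 1)})))"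

text \<open>Word equivalence: for c = False this is equality in Br(D_n) (group presentation);
  for c = True the extra relations y^2 = 1 are added, i.e. equality in W(D_n).\<close>
inductive drel :: "bool \<Rightarrow> nat \<Rightarrow> dword \<Rightarrow> dword \<Rightarrow> bool" for c :: bool and n :: nat where
  refl: "drel c n w w"
| sym: "drel c n u v \<Longrightarrow> drel c n v u"
| trans: "drel c n u v \<Longrightarrow> drel c n v w \<Longrightarrow> drel c n u w"
| ctxt: "drel c n u v \<Longrightarrow> drel c n (p @ u @ q) (p @ v @ q)"
| free: "valid_gen n g \<Longrightarrow> drel c n [(g, b), (g, \<not> b)] []"
| comm: "valid_gen n g \<Longrightarrow> valid_gen n h \<Longrightarrow> \<not> adj n g h \<Longrightarrow>
           drel c n [(g, False), (h, False)] [(h, False), (g, False)]"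
| braid: "adj n g h \<Longrightarrow>
           drel c n [(g, False), (h, False), (g, False)] [(h, False), (g, False), (h, False)]"
| invol: "c \<Longrightarrow> valid_gen n g \<Longrightarrow> drel c n [(g, False), (g, False)] []"

abbreviation br_eq :: "nat \<Rightarrow> dword \<Rightarrow> dword \<Rightarrow> bool" where
  "br_eq \<equiv> drel False"

abbreviation weyl_eq :: "nat \<Rightarrow> dword \<Rightarrow> dword \<Rightarrow> bool" where
  "weyl_eq \<equiv> drel True"

definition inv_word :: "dword \<Rightarrow> dword" where
  "inv_word w = rev (map (\<lambda>(g, e). (g, \<not> e)) w)"

definition up :: "nat \<Rightarrow> nat \<Rightarrow> dword" where
  "up i j = map (\<lambda>k. (Y k, False)) [i..<Suc j]"

definition down :: "nat \<Rightarrow> nat \<Rightarrow> dword" where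
  "down j i = rev (up i j)"

definition a_gen :: "nat \<Rightarrow> nat \<Rightarrow> dword" where
  "a_gen j i = down j i @ up i j"

definition a2'_gen :: "nat \<Rightarrow> dword" where
  "a2'_gen j = down j 3 @ [(Y2', False), (Y2', False)] @ up 3 j"

definition b_gen :: "nat \<Rightarrow> nat \<Rightarrow> dword" where
  "b_gen j i = down j 3 @ [(Y 2, False), (Y2', False)] @ up 3 i @ down i 3
               @ [(Y2', False), (Y 2, False)] @ up 3 j"

definition pure_gens :: "nat \<Rightarrow> dword set" where
  "pure_gens n =
     {a_gen j i | i j. 2 \<le> i \<and> i \<le> j \<and> j \<le> n}
   \<union> {[(Y2', False), (Y2', False)]}
   \<union> {a2'_gen j | j. 3 \<le> j \<and> j \<le> n}
   \<union> {b_gen j i | i j. 3 \<le> i \<and> i \<le> j \<and> j \<le> n}"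

end

theory Submission
  imports Defs
begin


lemmas gs = add.assoc diff_conv_add_uminus minus_add add_minus_cancel minus_add_cancel
  minus_minus right_minus left_minus add_0_left add_0_right minus_zero

lemma ctx: "(x::'g::group_add) = y \<Longrightarrow> x + z = y + z" by simp

lemma G_B1:
  fixes x y :: "'g::group_add"
  assumes r: "x + y + x = y + x + y"
  shows "x + y - x = -y + x + y"
proof -
  have "-y + x + y = -y + (x + y + x) - x" by (simp only: gs)
  also have "... = -y + (y + x + y) - x" by (simp only: r)
  also have "... = x + y - x" by (simp only: gs)
  finally show ?thesis by simp
qed

lemma conj_add: "(c::'g::group_add) + (a + b) - c = (c + a - c) + (c + b - c)"
  by (simp only: gs)
lemma conj_neg: "(c::'g::group_add) + (- a) - c = - (c + a - c)"
  by (simp only: gs)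

lemma G_B1sq:
  fixes x y :: "'g::group_add"
  assumes r: "x + y + x = y + x + y"
  shows "x + (y + y) - x = -y + (x + x) + y"
proof -
  have "x + (y + y) - x = (x + y - x) + (x + y - x)" by (simp only: gs)
  also have "... = (-y + x + y) + (-y + x + y)" by (simp only: G_B1[OF r])
  also have "... = -y + (x + x) + y" by (simp only: gs)
  finally show ?thesis .
qed

lemma G_S1:
  fixes a b :: "'g::group_add"
  assumes r: "a + b + a = b + a + b"
  shows "a + (b + b) + a = -b + (a + a) + b + (a + a)"
proof -
  have "a + (b + b) + a = (a + (b + b) - a) + (a + a)" by (simp only: gs)
  also have "... = -b + (a + a) + b + (a + a)" by (simp only: G_B1sq[OF r])
  finally show ?thesis .
qed

lemma G_claim1:
  fixes a b c :: "'g::group_add"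
  assumes ab: "a + b + a = b + a + b" and cb: "c + b + c = b + c + b" and ac: "a + c = c + a"
  shows "-c + (b + a - b) + c = (b + a + c) + b - (b + a + c)"
proof -
  have r1: "b + a - b = -a + b + a" using G_B1[of b a] ab by simp
  have r2: "c + b - c = -b + c + b" using G_B1[of c b] cb by simp
  have r3: "-c + b + c = b + c - b" using G_B1[of b c] cb by simp
  have r4: "b - a - b = -a - b + a"
  proof -
    have "b - a - b = - (b + a - b)" by (simp only: gs)
    also have "... = - (-a + b + a)" by (simp only: r1)
    also have "... = -a - b + a" by (simp only: gs)
    finally show ?thesis .
  qed
  have ac': "-c + -a = -a + -c" using ac by (metis minus_add)
  have ca': "c + -a = -a + c"
  proof -
    have "c + -a = -a + (a + c) + -a" by (simp only: gs)
    also have "... = -a + (c + a) + -a" by (simp only: ac)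
    also have "... = -a + c" by (simp only: gs)
    finally show ?thesis .
  qed
  have "-c + (b + a - b) + c = -c + (-a + b + a) + c" by (simp only: r1)
  also have "... = (-c + -a) + b + (a + c)" by (simp only: gs)
  also have "... = (-a + -c) + b + (c + a)" by (simp only: ac ac')
  also have "... = -a + (-c + b + c) + a" by (simp only: gs)
  also have "... = -a + (b + c - b) + a" by (simp only: r3)
  finally have L: "-c + (b + a - b) + c = -a + (b + c - b) + a" .
  have "(b + a + c) + b - (b + a + c) = b + a + (c + b - c) - a - b" by (simp only: gs)
  also have "... = b + a + (-b + c + b) - a - b" by (simp only: r2)
  also have "... = (b + a - b) + c + (b - a - b)" by (simp only: gs)
  also have "... = (-a + b + a) + c + (-a - b + a)" by (simp only: r1 r4)
  also have "... = -a + b + (a + c + -a) + - b + a" by (simp only: gs)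
  also have "... = -a + b + (c + a + -a) + - b + a" by (simp only: ac)
  also have "... = -a + (b + c - b) + a" by (simp only: gs)
  finally show ?thesis using L by simp
qed


lemma G_S23:
  fixes a b c :: "'g::group_add"
  assumes ab: "a + b + a = b + a + b" and cb: "c + b + c = b + c + b" and ac: "a + c = c + a"
  shows "c + (b + (a + a) - b) - c = (c + c) + ((b + a + c) + (b + b) - (b + a + c)) - (c + c)"
proof -
  define Z where "Z = (b + a + c) + b - (b + a + c)"
  have cl: "-c + (b + a - b) + c = Z" using G_claim1[OF ab cb ac] by (simp add: Z_def)
  have e1: "b + a - b = c + Z - c"
  proof -
    have "b + a - b = c + (-c + (b + a - b) + c) - c" by (simp only: gs)
    also have "... = c + Z - c" by (simp only: cl)
    finally show ?thesis .
  qed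
  have "c + (b + (a + a) - b) - c = c + ((b + a - b) + (b + a - b)) - c" by (simp only: gs)
  also have "... = c + ((c + Z - c) + (c + Z - c)) - c" by (simp only: e1)
  also have "... = (c + c) + ((b + a + c) + (b + b) - (b + a + c)) - (c + c)" by (simp only: gs Z_def)
  finally show ?thesis .
qed

lemma G_K1:
  fixes a b c :: "'g::group_add"
  assumes ab: "a + b + a = b + a + b" and cb: "c + b + c = b + c + b" and ac: "a + c = c + a"
  shows "c + b + a + c + b = b + a + c + b + a"
proof -
  have "c + b + a + c + b = (c + b) + (a + c) + b" by (simp only: add.assoc)
  also have "... = (c + b) + (c + a) + b" by (simp only: ac)
  also have "... = (c + b + c) + a + b" by (simp only: add.assoc)
  also have "... = (b + c + b) + a + b" by (simp only: cb)
  also have "... = b + c + (b + a + b)" by (simp only: add.assoc)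
  also have "... = b + c + (a + b + a)" by (simp only: ab)
  also have "... = b + (c + a) + b + a" by (simp only: add.assoc)
  also have "... = b + (a + c) + b + a" by (simp only: ac)
  also have "... = b + a + c + b + a" by (simp only: add.assoc)
  finally show ?thesis .
qed

lemma G_4base:
  fixes a b c :: "'g::group_add"
  assumes ab: "a + b + a = b + a + b" and cb: "c + b + c = b + c + b" and ac: "a + c = c + a"
  shows "(a + c) + b + (a + c) + b = b + (a + c) + b + (a + c)"
proof -
  have "(a + c) + b + (a + c) + b = a + (c + b + a + c + b)" by (simp only: add.assoc)
  also have "... = a + (b + a + c + b + a)" by (simp only: G_K1[OF ab cb ac])
  also have "... = (a + b + a) + c + b + a" by (simp only: add.assoc)
  also have "... = (b + a + b) + c + b + a" by (simp only: ab)
  also have "... = b + a + (b + c + b) + a" by (simp only: add.assoc)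
  also have "... = b + a + (c + b + c) + a" by (simp only: cb)
  also have "... = b + a + c + b + (c + a)" by (simp only: add.assoc)
  also have "... = b + a + c + b + (a + c)" by (simp only: ac)
  also have "... = b + (a + c) + b + (a + c)" by (simp only: add.assoc)
  finally show ?thesis .
qed

lemma G_4step:
  fixes y p q :: "'g::group_add"
  assumes yb: "y + p + y + p = p + y + p + y" and yq: "y + q = q + y"
    and br: "p + q + p = q + p + q"
  shows "(p + y + p) + q + (p + y + p) + q = q + (p + y + p) + q + (p + y + p)"
proof -
  have "(p + y + p) + q + (p + y + p) + q = p + y + (p + q + p) + y + p + q" by (simp only: add.assoc)
  also have "... = p + y + (q + p + q) + y + p + q" by (simp only: br)
  also have "... = p + y + q + p + (q + y) + p + q" by (simp only: add.assoc)
  also have "... = p + y + q + p + (y + q) + p + q" by (simp only: yq)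
  also have "... = p + y + q + p + y + (q + p + q)" by (simp only: add.assoc)
  also have "... = p + y + q + p + y + (p + q + p)" by (simp only: br)
  also have "... = p + (y + q) + p + y + p + q + p" by (simp only: add.assoc)
  also have "... = p + (q + y) + p + y + p + q + p" by (simp only: yq)
  also have "... = p + q + (y + p + y + p) + q + p" by (simp only: add.assoc)
  also have "... = p + q + (p + y + p + y) + q + p" by (simp only: yb)
  also have "... = (p + q + p) + y + p + y + q + p" by (simp only: add.assoc)
  also have "... = (q + p + q) + y + p + y + q + p" by (simp only: br)
  also have "... = q + p + (q + y) + p + y + q + p" by (simp only: add.assoc)
  also have "... = q + p + (y + q) + p + y + q + p" by (simp only: yq)
  also have "... = q + p + y + q + p + (y + q) + p" by (simp only: add.assoc)
  also have "... = q + p + y + q + p + (q + y) + p" by (simp only: yq)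
  also have "... = q + p + y + (q + p + q) + y + p" by (simp only: add.assoc)
  also have "... = q + p + y + (p + q + p) + y + p" by (simp only: br)
  also have "... = q + (p + y + p) + q + (p + y + p)" by (simp only: add.assoc)
  finally show ?thesis .
qed

lemma G_S6:
  fixes y p :: "'g::group_add"
  assumes yb: "y + p + y + p = p + y + p + y"
  shows "-y + (p + p) + y = p + y + (p + p) - y - p"
proof -
  have "p + y + (p + p) - y - p = -y + (y + p + y + p) + p - y - p" by (simp only: gs)
  also have "... = -y + (p + y + p + y) + p - y - p" by (simp only: yb)
  also have "... = -y + p + (y + p + y + p) - y - p" by (simp only: gs)
  also have "... = -y + p + (p + y + p + y) - y - p" by (simp only: yb)
  also have "... = -y + (p + p) + y" by (simp only: gs)
  finally show ?thesis by simp
qed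




locale dbr =
  fixes N :: nat and s :: "nat \<Rightarrow> 'g::group_add" and t :: 'g and rho :: "'g \<Rightarrow> 'g"
  assumes N4: "4 \<le> N"
  and s_comm: "\<lbrakk>2 \<le> k; l \<le> N; k + 2 \<le> l\<rbrakk> \<Longrightarrow> s k + s l = s l + s k"
  and s_braid: "\<lbrakk>2 \<le> k; k + 1 \<le> N\<rbrakk> \<Longrightarrow> s k + s (k+1) + s k = s (k+1) + s k + s (k+1)"
  and t_comm: "\<lbrakk>2 \<le> k; k \<le> N; k \<noteq> 3\<rbrakk> \<Longrightarrow> t + s k = s k + t"
  and t_braid: "t + s 3 + t = s 3 + t + s 3"
  and rho_add: "rho (x + y) = rho y + rho x"
  and rho_s: "rho (s k) = s k" and rho_t: "rho t = t"
begin

lemma rho_0: "rho 0 = 0"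
proof -
  have h: "rho 0 + rho 0 = rho 0 + 0" using rho_add[of 0 0] by (simp only: add_0_left add_0_right)
  show ?thesis using add_left_imp_eq[OF h] .
qed

lemma rho_minus: "rho (- x) = - rho x"
proof -
  have "rho (-x) + rho x = 0" using rho_add[of x "-x"] rho_0 by simp
  then show ?thesis by (simp add: eq_neg_iff_add_eq_0)
qed

definition dn :: "nat \<Rightarrow> nat \<Rightarrow> 'g" where
  "dn j i = sum_list (map s (rev [i..<Suc j]))"
definition uw :: "nat \<Rightarrow> nat \<Rightarrow> 'g" where
  "uw i j = sum_list (map s [i..<Suc j])"

lemma dn_empty: "j < i \<Longrightarrow> dn j i = 0" by (simp add: dn_def)
lemma up_empty: "j < i \<Longrightarrow> uw i j = 0" by (simp add: uw_def)
lemma dn_Suc: "i \<le> Suc j \<Longrightarrow> dn (Suc j) i = s (Suc j) + dn j i"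
  by (simp add: dn_def)
lemma up_Suc: "i \<le> Suc j \<Longrightarrow> uw i (Suc j) = uw i j + s (Suc j)"
  by (simp add: uw_def sum_list_append)
lemma up_low: "i \<le> j \<Longrightarrow> uw i j = s i + uw (Suc i) j"
  by (simp del: upt_Suc add: uw_def upt_conv_Cons)
lemma dn_low: "i \<le> j \<Longrightarrow> dn j i = dn j (Suc i) + s i"
  by (simp del: upt_Suc add: dn_def upt_conv_Cons)
lemma rho_sum_list: "rho (sum_list xs) = sum_list (map rho (rev xs))"
  by (induction xs) (simp_all add: rho_0 rho_add sum_list_append)
lemma rho_sum_s: "rho (sum_list (map s xs)) = sum_list (map s (rev xs))"
  by (induction xs) (simp_all add: rho_0 rho_add rho_s sum_list_append)
lemma rho_dn: "rho (dn j i) = uw i j"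
  by (simp add: dn_def uw_def rho_sum_s)
lemma rho_up: "rho (uw i j) = dn j i"
  by (simp add: dn_def uw_def rho_sum_s)


lemma s_comm': "\<lbrakk>2 \<le> k; 2 \<le> l; k \<le> N; l \<le> N; k + 2 \<le> l \<or> l + 2 \<le> k\<rbrakk> \<Longrightarrow> s k + s l = s l + s k"
  using s_comm by metis

lemma mv: "(x::'g) + a = a + y \<Longrightarrow> x + (a + b) = a + (y + b)"
  by (simp add: add.assoc[symmetric])

lemma comm_dn: "\<lbrakk>2 \<le> k; k \<le> N; 2 \<le> i; j \<le> N; k + 2 \<le> i \<or> j + 2 \<le> k\<rbrakk>
   \<Longrightarrow> s k + dn j i = dn j i + s k"
proof (induction j)
  case 0 then show ?case by (simp add: dn_empty)
next
  case (Suc j)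
  show ?case
  proof (cases "i \<le> Suc j")
    case False then show ?thesis by (simp add: dn_empty)
  next
    case True
    have c: "s k + s (Suc j) = s (Suc j) + s k" using Suc.prems True by (intro s_comm') auto
    have ih: "s k + dn j i = dn j i + s k" by (rule Suc.IH) (use Suc.prems in auto)
    show ?thesis using mv[OF c, of "dn j i"] by (simp add: dn_Suc True ih add.assoc)
  qed
qed

lemma comm_up: "\<lbrakk>2 \<le> k; k \<le> N; 2 \<le> i; j \<le> N; k + 2 \<le> i \<or> j + 2 \<le> k\<rbrakk>
   \<Longrightarrow> s k + uw i j = uw i j + s k"
proof -
  assume a: "2 \<le> k" "k \<le> N" "2 \<le> i" "j \<le> N" "k + 2 \<le> i \<or> j + 2 \<le> k"
  have "rho (s k + dn j i) = rho (dn j i + s k)" using comm_dn[OF a] by simp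
  then show ?thesis by (simp add: rho_add rho_dn rho_s)
qed

lemma shift_dn: "\<lbrakk>2 \<le> i; i \<le> k; k + 1 \<le> j; j \<le> N\<rbrakk>
   \<Longrightarrow> s k + dn j i = dn j i + s (k+1)"
proof (induction j)
  case 0 then show ?case by simp
next
  case (Suc j)
  show ?case
  proof (cases "Suc j = k + 1")
    case True
    hence jk: "j = k" by simp
    have W: "s (k+1) + dn (k - 1) i = dn (k - 1) i + s (k+1)"
      using Suc.prems by (intro comm_dn) auto
    have d1: "dn (Suc j) i = s (k+1) + s k + dn (k - 1) i"
      using Suc.prems jk dn_Suc[of i j] dn_Suc[of i "k - 1"] by (cases k) (auto simp: add.assoc)
    have "s k + dn (Suc j) i = (s k + s (k+1) + s k) + dn (k - 1) i" by (simp add: d1 add.assoc)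
    also have "... = (s (k+1) + s k + s (k+1)) + dn (k - 1) i" using Suc.prems by (simp only: s_braid)
    also have "... = s (k+1) + s k + (s (k+1) + dn (k - 1) i)" by (simp only: add.assoc)
    also have "... = s (k+1) + s k + (dn (k - 1) i + s (k+1))" by (simp only: W)
    also have "... = dn (Suc j) i + s (k+1)" by (simp add: d1 add.assoc)
    finally show ?thesis .
  next
    case False
    hence kj: "k + 1 \<le> j" using Suc.prems by simp
    have c: "s k + s (Suc j) = s (Suc j) + s k" using Suc.prems kj by (intro s_comm') auto
    have ih: "s k + dn j i = dn j i + s (k+1)" by (rule Suc.IH) (use Suc.prems kj in auto)
    have ij: "i \<le> Suc j" using Suc.prems by simp
    show ?thesis using mv[OF c, of "dn j i"] by (simp add: dn_Suc ij ih add.assoc)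
  qed
qed

lemma shift_up: "\<lbrakk>2 \<le> i; i \<le> k; k + 1 \<le> j; j \<le> N\<rbrakk>
   \<Longrightarrow> s (k+1) + uw i j = uw i j + s k"
proof -
  assume a: "2 \<le> i" "i \<le> k" "k + 1 \<le> j" "j \<le> N"
  have "rho (s k + dn j i) = rho (dn j i + s (k+1))" using shift_dn[OF a] by simp
  then show ?thesis by (simp add: rho_add rho_dn rho_s)
qed

lemma t_dn: "\<lbrakk>2 \<le> i; j \<le> N; 3 < i \<or> j < 3\<rbrakk> \<Longrightarrow> t + dn j i = dn j i + t"
proof (induction j)
  case 0 then show ?case by (simp add: dn_empty)
next
  case (Suc j)
  show ?case
  proof (cases "i \<le> Suc j")
    case False then show ?thesis by (simp add: dn_empty)
  next
    case True
    have c: "t + s (Suc j) = s (Suc j) + t" using Suc.prems True by (intro t_comm) auto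
    have ih: "t + dn j i = dn j i + t" by (rule Suc.IH) (use Suc.prems in auto)
    show ?thesis using mv[OF c, of "dn j i"] by (simp add: dn_Suc True ih add.assoc)
  qed
qed

lemma t_up: "\<lbrakk>2 \<le> i; j \<le> N; 3 < i \<or> j < 3\<rbrakk> \<Longrightarrow> t + uw i j = uw i j + t"
proof -
  assume a: "2 \<le> i" "j \<le> N" "3 < i \<or> j < 3"
  have "rho (t + dn j i) = rho (dn j i + t)" using t_dn[OF a] by simp
  then show ?thesis by (simp add: rho_add rho_dn rho_t)
qed


definition Q :: "'g \<Rightarrow> 'g" where "Q g = g + rho g"
definition Cw :: "nat \<Rightarrow> nat \<Rightarrow> 'g" where "Cw q i = dn q 3 + s 2 + t + uw 3 i"
definition gens :: "'g set" where
  "gens = {Q (dn q i) | q i. 2 \<le> i \<and> i \<le> q \<and> q \<le> N}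
        \<union> {Q (dn q 3 + t) | q. 2 \<le> q \<and> q \<le> N}
        \<union> {Q (Cw q i) | q i. 3 \<le> i \<and> i \<le> q \<and> q \<le> N}"

inductive_set Hs :: "'g set" where
  gen: "g \<in> gens \<Longrightarrow> g \<in> Hs"
| zero: "0 \<in> Hs"
| add: "a \<in> Hs \<Longrightarrow> b \<in> Hs \<Longrightarrow> a + b \<in> Hs"
| neg: "a \<in> Hs \<Longrightarrow> - a \<in> Hs"

lemma Hs_diff: "a \<in> Hs \<Longrightarrow> b \<in> Hs \<Longrightarrow> a - b \<in> Hs"
  by (simp only: diff_conv_add_uminus) (intro Hs.add Hs.neg)
lemma Hs_conj: "c \<in> Hs \<Longrightarrow> a \<in> Hs \<Longrightarrow> c + a - c \<in> Hs"
  by (intro Hs_diff Hs.add)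
lemma Hs_add3: "a \<in> Hs \<Longrightarrow> b \<in> Hs \<Longrightarrow> c \<in> Hs \<Longrightarrow> a + b + c \<in> Hs"
  by (intro Hs.add)

lemma Q_add: "Q (g + h) = g + Q h - g + Q g"
  by (simp only: Q_def rho_add gs)
lemma Q_fix: "rho x = x \<Longrightarrow> Q x = x + x"
  by (simp add: Q_def)
lemma Q_zero: "Q 0 = 0" by (simp add: Q_def rho_0)

lemma R_eq: "rho y = y \<Longrightarrow> g + (y + y) - g = Q (g + y) - Q g"
  by (simp only: Q_add Q_fix gs)
lemma Vlift: "V + Q w - V = Q (V + w) - Q V"
  by (simp only: Q_add gs)
lemma R_in: "rho y = y \<Longrightarrow> Q (g + y) \<in> Hs \<Longrightarrow> Q g \<in> Hs \<Longrightarrow> g + (y + y) - g \<in> Hs"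
  by (simp only: R_eq) (rule Hs_diff)
lemma Vlift_in: "Q (V + w) \<in> Hs \<Longrightarrow> Q V \<in> Hs \<Longrightarrow> V + Q w - V \<in> Hs"
  by (simp only: Vlift) (rule Hs_diff)

lemma Hs_dn: "2 \<le> i \<Longrightarrow> q \<le> N \<Longrightarrow> Q (dn q i) \<in> Hs"
proof (cases "i \<le> q")
  case True
  assume "2 \<le> i" "q \<le> N"
  then show ?thesis using True by (intro Hs.gen) (auto simp: gens_def)
next
  case False then show ?thesis by (simp add: dn_empty Q_zero Hs.zero)
qed
lemma Hs_B: "2 \<le> q \<Longrightarrow> q \<le> N \<Longrightarrow> Q (dn q 3 + t) \<in> Hs"
  by (intro Hs.gen) (auto simp: gens_def)
lemma Hs_C: "3 \<le> i \<Longrightarrow> i \<le> q \<Longrightarrow> q \<le> N \<Longrightarrow> Q (Cw q i) \<in> Hs"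
  by (intro Hs.gen) (auto simp: gens_def)

lemma dn_self: "1 \<le> k \<Longrightarrow> dn k k = s k"
  using dn_Suc[of k "k - 1"] by (cases k) (auto simp: dn_empty)
lemma up_self: "uw k k = s k"
  by (simp add: uw_def)

lemma Hs_ss: "2 \<le> k \<Longrightarrow> k \<le> N \<Longrightarrow> s k + s k \<in> Hs"
  using Hs_dn[of k k] by (simp add: dn_self Q_fix rho_s)
lemma Hs_tt: "t + t \<in> Hs"
  using Hs_B[of 2] N4 by (simp add: dn_empty Q_fix rho_t)

lemma T1:
  assumes rx: "rho x = x" and ry: "rho y = y" and c: "x + g = g + y"
    and hg: "Q g \<in> Hs" and hx: "x + x \<in> Hs"
  shows "Q (x + g) \<in> Hs"
proof -
  have c': "rho g + x = y + rho g" using arg_cong[OF c, of rho] by (simp add: rho_add rx ry)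
  have "x + Q g - x = (x + g) + rho g - x" by (simp only: Q_def gs)
  also have "... = g + (y + rho g) - x" by (simp only: c add.assoc)
  also have "... = g + (rho g + x) - x" by (simp only: c')
  also have "... = Q g" by (simp only: Q_def gs)
  finally have e: "x + Q g - x = Q g" .
  have "Q (x + g) = x + Q g - x + (x + x)" by (simp only: Q_add Q_fix[OF rx])
  then show ?thesis using e hg hx by (simp add: Hs.add)
qed

lemma T3:
  assumes rx: "rho x = x" and hg: "Q g \<in> Hs" and hx: "x + x \<in> Hs"
  shows "Q (x + (x + g)) \<in> Hs"
proof -
  have "Q (x + (x + g)) = (x + x) + Q g + (x + x)"
    by (simp only: Q_def rho_add rx gs)
  then show ?thesis using hg hx by (simp add: Hs.add)
qed

lemma comm_conj: assumes "(x::'g) + V = V + x" shows "V + x - V = x"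
proof -
  have "V + x - V = x + V - V" by (simp only: assms)
  also have "x + V - V = x" by (rule add_diff_cancel)
  finally show ?thesis .
qed
lemma comm_conj2: assumes "(x::'g) + V = V + x" shows "V + (x + x) - V = x + x"
  using conj_add[of V x x] comm_conj[OF assms] by simp

lemma S1:
  assumes ra: "rho a = a" and rb: "rho b = b" and br: "a + b + a = b + a + b"
    and aV: "a + V = V + a"
    and h1: "Q V \<in> Hs" and h2: "Q (V + b) \<in> Hs" and h3: "Q (V + b + a) \<in> Hs" and ha: "a + a \<in> Hs"
  shows "Q (a + (V + b)) \<in> Hs"
proof -
  have e0: "a + (V + b) = V + (a + b)" by (simp only: add.assoc[symmetric] aV)
  have "Q (a + b) = a + (b + b) + a" by (simp only: Q_def rho_add ra rb gs)
  also have "... = -b + (a + a) + b + (a + a)" by (rule G_S1[OF br])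
  also have "... = - (b + b) + Q (b + a) + (a + a)" by (simp only: Q_def rho_add ra rb gs)
  finally have e1: "Q (a + b) = - (b + b) + Q (b + a) + (a + a)" .
  have "V + Q (a + b) - V = - (V + (b + b) - V) + (V + Q (b + a) - V) + (V + (a + a) - V)"
    by (simp only: e1 conj_add conj_neg)
  also have "... = - (V + (b + b) - V) + (V + Q (b + a) - V) + (a + a)"
    by (simp only: comm_conj2[OF aV])
  finally have e2: "V + Q (a + b) - V = - (V + (b + b) - V) + (V + Q (b + a) - V) + (a + a)" .
  have m1: "V + (b + b) - V \<in> Hs" using R_in[OF rb h2 h1] .
  have m2: "V + Q (b + a) - V \<in> Hs" using Vlift_in[of V "b + a"] h3 h1 by (simp add: add.assoc)
  have "Q (a + (V + b)) = V + Q (a + b) - V + Q V" unfolding e0 by (rule Q_add)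
  also have "... = - (V + (b + b) - V) + (V + Q (b + a) - V) + (a + a) + Q V" by (simp only: e2)
  finally show ?thesis using m1 m2 ha h1 by (simp only:) (intro m1 m2 ha h1 Hs.add Hs.neg)
qed


lemma S23:
  assumes rx: "rho x = x" and ry: "rho y = y" and rb: "rho b = b"
    and xb: "x + b + x = b + x + b" and yb: "y + b + y = b + y + b" and xy: "y + x = x + y"
    and xV: "x + V = V + x"
    and h0: "Q V \<in> Hs" and h1: "Q (V + b) \<in> Hs" and h2: "Q (V + b + x) \<in> Hs"
    and h3: "Q (V + b + y + x) \<in> Hs" and h4: "Q (V + b + y + x + b) \<in> Hs" and hx: "x + x \<in> Hs"
  shows "Q (x + (V + b + y)) \<in> Hs"
proof -
  define Rr where "Rr = (b + y + x) + (b + b) - (b + y + x)"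
  have g: "x + (b + (y + y) - b) - x = (x + x) + Rr - (x + x)"
    using G_S23[OF yb xb xy] by (simp only: Rr_def)
  have e1: "Q (x + b + y) = (x + (b + (y + y) - b) - x) + (x + (b + b) + x)"
    by (simp only: Q_def rho_add rx ry rb gs)
  have e2: "x + (b + b) + x = - (b + b) + Q (b + x) + (x + x)"
    using G_S1[OF xb] by (simp only: Q_def rho_add rx rb gs)
  have xxV: "V + (x + x) = (x + x) + V"
  proof -
    have "V + (x + x) = (V + x) + x" by (simp only: add.assoc)
    also have "... = (x + V) + x" by (simp only: xV)
    also have "... = x + (V + x)" by (simp only: add.assoc)
    also have "... = x + (x + V)" by (simp only: xV)
    also have "... = (x + x) + V" by (simp only: add.assoc)
    finally show ?thesis .
  qed
  have e3: "V + ((x + x) + Rr - (x + x)) - V = (x + x) + (V + Rr - V) - (x + x)"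
  proof -
    have "V + ((x + x) + Rr - (x + x)) - V = (V + (x + x)) + Rr - (V + (x + x))" by (simp only: gs)
    also have "... = ((x + x) + V) + Rr - ((x + x) + V)" by (simp only: xxV)
    also have "... = (x + x) + (V + Rr - V) - (x + x)" by (simp only: gs)
    finally show ?thesis .
  qed
  have e4: "V + Rr - V = (V + b + y + x) + (b + b) - (V + b + y + x)"
    by (simp only: Rr_def gs)
  have m4: "V + Rr - V \<in> Hs" unfolding e4 by (rule R_in[OF rb h4 h3])
  have m1: "V + (b + b) - V \<in> Hs" by (rule R_in[OF rb h1 h0])
  have m2: "V + Q (b + x) - V \<in> Hs" using Vlift_in[of V "b + x"] h2 h0 by (simp only: add.assoc)
  have m3: "V + (x + x) - V = x + x" by (rule comm_conj2[OF xV])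
  have e0: "x + (V + b + y) = V + (x + b + y)" by (simp only: add.assoc[symmetric] xV)
  have "Q (x + (V + b + y)) = V + Q (x + b + y) - V + Q V" unfolding e0 by (rule Q_add)
  also have "... = V + (((x + x) + Rr - (x + x)) + (- (b + b) + Q (b + x) + (x + x))) - V + Q V"
    by (simp only: e1 e2 g)
  also have "... = (V + ((x + x) + Rr - (x + x)) - V) + (- (V + (b + b) - V))
       + (V + Q (b + x) - V) + (V + (x + x) - V) + Q V"
    by (simp only: conj_add conj_neg add.assoc)
  also have "... = ((x + x) + (V + Rr - V) - (x + x)) + (- (V + (b + b) - V))
       + (V + Q (b + x) - V) + (x + x) + Q V"
    by (simp only: e3 m3)
  finally show ?thesis using m1 m2 m4 hx h0
    by (simp only:) (intro m1 m2 hx h0 Hs.add Hs.neg Hs_conj m4)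
qed

lemma Q_Cpre: "2 \<le> q \<Longrightarrow> Q (dn q 3 + s 2 + t) = (Q (dn q 3 + t) - Q (dn q 3)) + Q (dn q 2)"
proof -
  assume q: "2 \<le> q"
  have ts: "t + s 2 = s 2 + t" using N4 by (intro t_comm) auto
  have d2: "dn q 3 + s 2 = dn q 2" using dn_low[of 2 q] q by (simp add: numeral_3_eq_3)
  have c1: "(dn q 3 + s 2) + (t + t) - (dn q 3 + s 2) = dn q 3 + (s 2 + (t + t) - s 2) - dn q 3"
    by (simp only: gs)
  have c2: "s 2 + (t + t) - s 2 = t + t" by (rule comm_conj2[OF ts])
  have c3: "dn q 3 + (t + t) - dn q 3 = Q (dn q 3 + t) - Q (dn q 3)" by (rule R_eq[OF rho_t])
  have "Q (dn q 3 + s 2 + t) = ((dn q 3 + s 2) + (t + t) - (dn q 3 + s 2)) + Q (dn q 3 + s 2)"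
    by (simp only: Q_add Q_fix[OF rho_t])
  also have "... = (dn q 3 + (s 2 + (t + t) - s 2) - dn q 3) + Q (dn q 3 + s 2)"
    by (simp only: c1)
  also have "... = (Q (dn q 3 + t) - Q (dn q 3)) + Q (dn q 3 + s 2)"
    by (simp only: c2 c3)
  also have "... = (Q (dn q 3 + t) - Q (dn q 3)) + Q (dn q 2)"
    by (simp only: d2)
  finally show ?thesis .
qed

lemma Hs_Cw: "2 \<le> i \<Longrightarrow> i \<le> q \<Longrightarrow> q \<le> N \<Longrightarrow> Q (Cw q i) \<in> Hs"
proof (cases "i = 2")
  case True
  assume q: "2 \<le> i" "i \<le> q" "q \<le> N"
  have "Cw q i = dn q 3 + s 2 + t" using True by (simp add: Cw_def up_empty)
  then show ?thesis using Q_Cpre[of q] q True Hs_B[of q] Hs_dn[of 3 q] Hs_dn[of 2 q]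
    by (simp only:) (intro Hs.add Hs_diff, auto)
next
  case False
  assume "2 \<le> i" "i \<le> q" "q \<le> N"
  then show ?thesis using False by (intro Hs_C) auto
qed

lemma caseA_s:
  assumes a: "2 \<le> i" "i \<le> q" "q \<le> N" "2 \<le> k" "k \<le> N"
  shows "Q (s k + dn q i) \<in> Hs"
proof -
  have hk: "s k + s k \<in> Hs" using a Hs_ss by simp
  consider "k + 2 \<le> i \<or> q + 2 \<le> k" | "i \<le> k \<and> k + 1 \<le> q" | "k = q" | "k = q + 1" | "k + 1 = i"
    by linarith
  then show ?thesis
  proof cases
    case 1 then show ?thesis using a hk by (intro T1[OF rho_s rho_s comm_dn Hs_dn]) auto
  next
    case 2 then show ?thesis using a hk by (intro T1[OF rho_s rho_s shift_dn Hs_dn]) auto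
  next
    case 3
    have "dn q i = s q + dn (q - 1) i" using dn_Suc[of i "q - 1"] a by simp
    then show ?thesis using 3 a hk by (simp only:) (intro T3[OF rho_s Hs_dn], auto)
  next
    case 4
    have "s k + dn q i = dn (q + 1) i" using dn_Suc[of i q] a 4 by simp
    then show ?thesis using a 4 by (simp only:) (intro Hs_dn, auto)
  next
    case 5
    have e1: "dn q i = dn q (i + 1) + s i" using dn_low[of i q] a by simp
    have e2: "dn q (i + 1) + s i + s k = dn q k" using dn_low[of k q] e1 a 5 by simp
    have br: "s k + s i + s k = s i + s k + s i" using s_braid[of k] a 5 by simp
    have cV: "s k + dn q (i + 1) = dn q (i + 1) + s k" using a 5 by (intro comm_dn) auto
    show ?thesis unfolding e1
      by (rule S1[OF rho_s rho_s br cV]) (use a 5 hk e1[symmetric] e2 Hs_dn in auto)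
  qed
qed


lemma mv2:
  assumes "(x::'g) + a = a + y" and "y + b = b + z"
  shows "x + (a + b) = (a + b) + z"
proof -
  have "x + (a + b) = (x + a) + b" by (simp only: add.assoc)
  also have "... = a + (y + b)" by (simp only: assms(1) add.assoc)
  also have "... = (a + b) + z" by (simp only: assms(2) add.assoc)
  finally show ?thesis .
qed

lemma ts2: "t + s 2 = s 2 + t" using N4 by (intro t_comm) auto
lemma br23: "s 2 + s 3 + s 2 = s 3 + s 2 + s 3" using s_braid[of 2] N4 by simp
lemma d43: "3 \<le> q \<Longrightarrow> dn q 4 + s 3 = dn q 3"
  using dn_low[of 3 q] by simp
lemma d32: "2 \<le> q \<Longrightarrow> dn q 3 + s 2 = dn q 2"
  using dn_low[of 2 q] by (simp add: numeral_3_eq_3)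
lemma Cw2: "Cw q 2 = dn q 3 + s 2 + t" by (simp add: Cw_def up_empty)
lemma Cw3: "Cw q 3 = dn q 3 + s 2 + t + s 3" by (simp add: Cw_def up_self)
lemma Hs_Cw2: "2 \<le> q \<Longrightarrow> q \<le> N \<Longrightarrow> Q (dn q 3 + s 2 + t) \<in> Hs"
  using Hs_Cw[of 2 q] by (simp add: Cw2)
lemma Hs_Cw3: "3 \<le> q \<Longrightarrow> q \<le> N \<Longrightarrow> Q (dn q 3 + s 2 + t + s 3) \<in> Hs"
  using Hs_Cw[of 3 q] by (simp add: Cw3)
lemma t4: "q \<le> N \<Longrightarrow> t + dn q 4 = dn q 4 + t" by (intro t_dn) auto

lemma caseA_t:
  assumes a: "2 \<le> i" "i \<le> q" "q \<le> N"
  shows "Q (t + dn q i) \<in> Hs"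
proof -
  consider "3 < i \<or> q < 3" | "i = 3" | "i = 2 \<and> 3 \<le> q" using a by linarith
  then show ?thesis
  proof cases
    case 1 then show ?thesis using a Hs_tt by (intro T1[OF rho_t rho_t t_dn Hs_dn]) auto
  next
    case 2
    have e: "dn q i = dn q 4 + s 3" using d43[of q] a 2 by simp
    show ?thesis unfolding e
      by (rule S1[OF rho_t rho_s t_braid t4]) (use a 2 Hs_tt Hs_dn Hs_B d43 in auto)
  next
    case 3
    have e: "dn q i = dn q 4 + s 3 + s 2" using d43[of q] d32[of q] a 3 by simp
    have h3: "Q (dn q 4 + s 3 + s 2 + t) \<in> Hs" using d43[of q] Hs_Cw2[of q] a 3 by simp
    have h4: "Q (dn q 4 + s 3 + s 2 + t + s 3) \<in> Hs" using d43[of q] Hs_Cw3[of q] a 3 by simp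
    show ?thesis unfolding e
      by (rule S23[OF rho_t rho_s rho_s t_braid br23 ts2[symmetric] t4 _ _ _ h3 h4 Hs_tt])
         (use a 3 Hs_dn Hs_B d43 in auto)
  qed
qed

lemma caseB_t:
  assumes a: "2 \<le> q" "q \<le> N"
  shows "Q (t + (dn q 3 + t)) \<in> Hs"
proof (cases "q = 2")
  case True
  have c: "t + (dn q 3 + t) = (dn q 3 + t) + t" using True by (simp add: dn_empty)
  show ?thesis by (rule T1[OF rho_t rho_t c Hs_B Hs_tt]) (use a in auto)
next
  case False
  have e: "dn q 3 + t = dn q 4 + s 3 + t" using d43[of q] a False by simp
  have c: "t + (dn q 4 + s 3 + t) = (dn q 4 + s 3 + t) + s 3"
  proof -
    have "t + (dn q 4 + s 3 + t) = (t + dn q 4) + (s 3 + t)" by (simp only: add.assoc)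
    also have "... = dn q 4 + (t + s 3 + t)" by (simp only: t4[OF a(2)] add.assoc)
    also have "... = dn q 4 + (s 3 + t + s 3)" by (simp only: t_braid)
    also have "... = (dn q 4 + s 3 + t) + s 3" by (simp only: add.assoc)
    finally show ?thesis .
  qed
  show ?thesis unfolding e
    by (rule T1[OF rho_t rho_s c _ Hs_tt]) (use a e[symmetric] Hs_B in auto)
qed

lemma caseB_s:
  assumes a: "2 \<le> q" "q \<le> N" "2 \<le> k" "k \<le> N"
  shows "Q (s k + (dn q 3 + t)) \<in> Hs"
proof -
  have hk: "s k + s k \<in> Hs" using a Hs_ss by simp
  consider "k = 2 \<and> q = 2" | "k = 2 \<and> 3 \<le> q" | "3 \<le> k \<and> k + 1 \<le> q" | "3 \<le> k \<and> k = q"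
    | "k = q + 1" | "q + 2 \<le> k" using a by linarith
  then show ?thesis
  proof cases
    case 1
    have c: "s k + (dn q 3 + t) = (dn q 3 + t) + s k" using 1 ts2 by (simp add: dn_empty)
    show ?thesis by (rule T1[OF rho_s rho_s c Hs_B hk]) (use a in auto)
  next
    case 2
    have e: "dn q 3 + t = dn q 4 + s 3 + t" using d43[of q] 2 by simp
    have xV: "s 2 + dn q 4 = dn q 4 + s 2" using a by (intro comm_dn) auto
    have h2: "Q (dn q 4 + s 3 + s 2) \<in> Hs" using d43[of q] d32[of q] Hs_dn[of 2 q] a 2 by simp
    have tt: "dn q 4 + s 3 + t + s 2 = dn q 3 + s 2 + t"
      using d43[of q] 2 by (simp add: add.assoc ts2)
    have h3: "Q (dn q 4 + s 3 + t + s 2) \<in> Hs" using tt Hs_Cw2[of q] a by simp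
    have h4: "Q (dn q 4 + s 3 + t + s 2 + s 3) \<in> Hs" using tt Hs_Cw3[of q] a 2 by simp
    show ?thesis unfolding e 2[THEN conjunct1]
      by (rule S23[OF rho_s rho_t rho_s br23 t_braid ts2 xV _ _ h2 h3 h4])
         (use a 2 Hs_dn Hs_ss d43 in auto)
  next
    case 3
    have c1: "s k + dn q 3 = dn q 3 + s (k + 1)" using a 3 by (intro shift_dn) auto
    have c2: "s (k + 1) + t = t + s (k + 1)" using a 3 t_comm[of "k+1"] by auto
    show ?thesis by (rule T1[OF rho_s rho_s mv2[OF c1 c2] Hs_B hk]) (use a in auto)
  next
    case 4
    have e: "dn q 3 + t = s q + (dn (q - 1) 3 + t)"
      using dn_Suc[of 3 "q - 1"] 4 by (simp add: add.assoc)
    have "Q (s q + (s q + (dn (q - 1) 3 + t))) \<in> Hs"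
      by (intro T3[OF rho_s Hs_B]) (use 4 a Hs_ss in auto)
    then show ?thesis using e 4 by simp
  next
    case 5
    have e: "s k + (dn q 3 + t) = dn (q + 1) 3 + t"
      using dn_Suc[of 3 q] 5 a by (simp add: add.assoc)
    show ?thesis unfolding e using 5 a by (intro Hs_B) auto
  next
    case 6
    have c1: "s k + dn q 3 = dn q 3 + s k" using a 6 by (intro comm_dn) auto
    have c2: "s k + t = t + s k" using a 6 t_comm[of k] by auto
    show ?thesis by (rule T1[OF rho_s rho_s mv2[OF c1 c2] Hs_B hk]) (use a in auto)
  qed
qed


lemma Cw_mv:
  assumes "x + dn q 3 = dn q 3 + y" "y + s 2 = s 2 + y" "y + t = t + y" "y + uw 3 i = uw 3 i + z"
  shows "x + Cw q i = Cw q i + z"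
  unfolding Cw_def by (rule mv2[OF mv2[OF mv2[OF assms(1,2)] assms(3)] assms(4)])

lemma Cw_exp: "3 \<le> i \<Longrightarrow> 3 \<le> q \<Longrightarrow> Cw q i = dn q 4 + (s 3 + s 2 + t + s 3) + uw 4 i"
  unfolding Cw_def using d43[of q, symmetric] up_low[of 3 i] by (simp add: add.assoc)

lemma caseC_t:
  assumes a: "3 \<le> i" "i \<le> q" "q \<le> N"
  shows "Q (t + Cw q i) \<in> Hs"
proof -
  have K: "t + s 3 + s 2 + t + s 3 = s 3 + s 2 + t + s 3 + s 2"
    by (rule G_K1[OF br23 t_braid ts2[symmetric]])
  have aU: "s 2 + uw 4 i = uw 4 i + s 2" using a by (intro comm_up) auto
  have c: "t + Cw q i = Cw q i + s 2"
  proof -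
    have "t + Cw q i = (t + dn q 4) + (s 3 + s 2 + t + s 3) + uw 4 i"
      using a by (simp only: Cw_exp add.assoc)
    also have "... = (dn q 4 + t) + (s 3 + s 2 + t + s 3) + uw 4 i" using a by (simp only: t4)
    also have "... = dn q 4 + (t + s 3 + s 2 + t + s 3) + uw 4 i" by (simp only: add.assoc)
    also have "... = dn q 4 + (s 3 + s 2 + t + s 3 + s 2) + uw 4 i" by (simp only: K)
    also have "... = dn q 4 + (s 3 + s 2 + t + s 3) + (s 2 + uw 4 i)" by (simp only: add.assoc)
    also have "... = dn q 4 + (s 3 + s 2 + t + s 3) + (uw 4 i + s 2)" by (simp only: aU)
    also have "... = Cw q i + s 2" using a by (simp only: Cw_exp add.assoc)
    finally show ?thesis .
  qed
  show ?thesis by (rule T1[OF rho_t rho_s c Hs_C Hs_tt]) (use a in auto)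
qed

lemma caseC_s2:
  assumes a: "3 \<le> i" "i \<le> q" "q \<le> N"
  shows "Q (s 2 + Cw q i) \<in> Hs"
proof -
  have K: "s 2 + s 3 + t + s 2 + s 3 = s 3 + t + s 2 + s 3 + t"
    by (rule G_K1[OF t_braid br23 ts2])
  have cU: "t + uw 4 i = uw 4 i + t" using a by (intro t_up) auto
  have cV: "s 2 + dn q 4 = dn q 4 + s 2" using a by (intro comm_dn) auto
  have c: "s 2 + Cw q i = Cw q i + t"
  proof -
    have "s 2 + Cw q i = (s 2 + dn q 4) + (s 3 + (s 2 + t) + s 3) + uw 4 i"
      using a by (simp only: Cw_exp add.assoc)
    also have "... = (dn q 4 + s 2) + (s 3 + (t + s 2) + s 3) + uw 4 i" by (simp only: cV ts2)
    also have "... = dn q 4 + (s 2 + s 3 + t + s 2 + s 3) + uw 4 i" by (simp only: add.assoc)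
    also have "... = dn q 4 + (s 3 + t + s 2 + s 3 + t) + uw 4 i" by (simp only: K)
    also have "... = dn q 4 + (s 3 + (t + s 2) + s 3) + (t + uw 4 i)" by (simp only: add.assoc)
    also have "... = dn q 4 + (s 3 + (s 2 + t) + s 3) + (uw 4 i + t)" by (simp only: cU ts2)
    also have "... = Cw q i + t" using a by (simp only: Cw_exp add.assoc)
    finally show ?thesis .
  qed
  show ?thesis by (rule T1[OF rho_s rho_t c Hs_C]) (use a Hs_ss N4 in auto)
qed

lemma S1':
  assumes rx: "rho x = x" and ry: "rho y = y" and br: "y + x + y = x + y + x"
    and c: "x + W = W + y"
    and h0: "Q W \<in> Hs" and h1: "Q (W + x) \<in> Hs" and h2: "Q (W + x + y) \<in> Hs" and hx: "x + x \<in> Hs"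
  shows "Q (x + (W + x)) \<in> Hs"
proof -
  have e0: "x + (W + x) = W + (y + x)" by (simp only: add.assoc[symmetric] c)
  have "Q (y + x) = y + (x + x) + y" by (simp only: Q_def rho_add rx ry gs)
  also have "... = -x + (y + y) + x + (y + y)" by (rule G_S1[OF br])
  also have "... = - (x + x) + Q (x + y) + (y + y)" by (simp only: Q_def rho_add rx ry gs)
  finally have e1: "Q (y + x) = - (x + x) + Q (x + y) + (y + y)" .
  have wy: "W + y - W = x"
  proof -
    have "W + y - W = x + W - W" by (simp only: c)
    also have "... = x" by (rule add_diff_cancel)
    finally show ?thesis .
  qed
  have wyy: "W + (y + y) - W = x + x" by (simp only: conj_add wy)
  have m1: "W + (x + x) - W \<in> Hs" by (rule R_in[OF rx h1 h0])
  have m2: "W + Q (x + y) - W \<in> Hs" using Vlift_in[of W "x + y"] h2 h0 by (simp only: add.assoc)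
  have "Q (x + (W + x)) = W + Q (y + x) - W + Q W" unfolding e0 by (rule Q_add)
  also have "... = - (W + (x + x) - W) + (W + Q (x + y) - W) + (W + (y + y) - W) + Q W"
    by (simp only: e1 conj_add conj_neg)
  also have "... = - (W + (x + x) - W) + (W + Q (x + y) - W) + (x + x) + Q W"
    by (simp only: wyy)
  finally show ?thesis by (simp only:) (intro m1 m2 hx h0 Hs.add Hs.neg)
qed

lemma Cw_comm:
  assumes "2 \<le> j" "j + 2 \<le> k" "4 \<le> k" "k \<le> N" "i \<le> j"
  shows "s k + Cw j i = Cw j i + s k"
proof (rule Cw_mv)
  show "s k + dn j 3 = dn j 3 + s k" using assms by (intro comm_dn) auto
  show "s k + s 2 = s 2 + s k" using assms by (intro s_comm') auto
  show "s k + t = t + s k" using assms t_comm[of k] by auto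
  show "s k + uw 3 i = uw 3 i + s k" using assms by (intro comm_up) auto
qed


lemma Cw22: "Cw 2 2 = s 2 + t" by (simp add: Cw_def dn_empty up_empty)

lemma Cw_step: "2 \<le> m \<Longrightarrow> Cw (Suc m) (Suc m) = s (Suc m) + Cw m m + s (Suc m)"
  unfolding Cw_def using dn_Suc[of 3 m] up_Suc[of 3 m] by (simp add: add.assoc)

lemma Cw_Suc: "2 \<le> m \<Longrightarrow> s (Suc m) + Cw m i = Cw (Suc m) i"
  unfolding Cw_def using dn_Suc[of 3 m] by (simp add: add.assoc)

lemma rho_Cw: "rho (Cw m m) = Cw m m"
proof -
  have "rho (Cw m m) = dn m 3 + (t + s 2) + uw 3 m"
    by (simp only: Cw_def rho_add rho_dn rho_up rho_s rho_t add.assoc)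
  also have "... = Cw m m" by (simp only: ts2 Cw_def add.assoc)
  finally show ?thesis .
qed

lemma fourb: "2 \<le> m \<Longrightarrow> m + 1 \<le> N \<Longrightarrow>
  Cw m m + s (m+1) + Cw m m + s (m+1) = s (m+1) + Cw m m + s (m+1) + Cw m m"
proof (induction m)
  case 0 then show ?case by simp
next
  case (Suc m)
  show ?case
  proof (cases "m = 1")
    case True
    hence m2: "Suc m = 2" by simp
    have "s (2 + 1) = s 3" by simp
    then show ?thesis unfolding m2 Cw22
      using G_4base[OF br23 t_braid ts2[symmetric]] by simp
  next
    case False
    hence m: "2 \<le> m" using Suc by simp
    have IH: "Cw m m + s (Suc m) + Cw m m + s (Suc m) = s (Suc m) + Cw m m + s (Suc m) + Cw m m"
      using Suc m by simp
    have yq: "Cw m m + s (Suc (Suc m)) = s (Suc (Suc m)) + Cw m m"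
      using Cw_comm[of m "Suc (Suc m)" m] m Suc.prems by simp
    have br: "s (Suc m) + s (Suc (Suc m)) + s (Suc m) = s (Suc (Suc m)) + s (Suc m) + s (Suc (Suc m))"
      using s_braid[of "Suc m"] m Suc.prems by simp
    show ?thesis using G_4step[OF IH yq br] Cw_step[OF m] by simp
  qed
qed

lemma S6:
  assumes m: "2 \<le> m" "m + 1 \<le> N"
  shows "Q (s (m+1) + Cw (m+1) (m+1)) \<in> Hs"
proof -
  define y where "y = Cw m m"
  define p where "p = s (m+1)"
  have ry: "rho y = y" unfolding y_def by (rule rho_Cw)
  have e: "Cw (m+1) (m+1) = p + y + p" using Cw_step[OF m(1)] by (simp add: y_def p_def)
  have yb: "y + p + y + p = p + y + p + y" using fourb[OF m] by (simp add: y_def p_def)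
  have hp: "p + p \<in> Hs" using m Hs_ss by (simp add: p_def)
  have hy: "Q y \<in> Hs" using Hs_Cw[of m m] m by (simp add: y_def)
  have h1: "Q (p + y + p) \<in> Hs" using Hs_Cw[of "m+1" "m+1"] m e by simp
  have h2: "Q (p + y) \<in> Hs" using Hs_Cw[of m "m+1"] m Cw_Suc[OF m(1), of m] by (simp add: y_def p_def)
  have "y + (p + p) - y = (y + y) + (-y + (p + p) + y) - (y + y)" by (simp only: gs)
  also have "-y + (p + p) + y = p + y + (p + p) - y - p" by (rule G_S6[OF yb])
  also have "... = (p + y) + (p + p) - (p + y)" by (simp only: gs)
  finally have e2: "y + (p + p) - y = (y + y) + ((p + y) + (p + p) - (p + y)) - (y + y)" .
  have yy: "y + y \<in> Hs" using hy Q_fix[OF ry] by simp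
  have m1: "(p + y) + (p + p) - (p + y) \<in> Hs" by (rule R_in[OF rho_s[of "m+1", folded p_def] h1 h2])
  have "Q (y + p) = y + (p + p) - y + Q y" by (simp only: Q_add Q_fix[OF rho_s[of "m+1", folded p_def]])
  hence hyp: "Q (y + p) \<in> Hs" using e2 m1 yy hy by (simp only:) (intro yy m1 hy Hs_conj Hs.add)
  have "Q (p + (p + (y + p))) \<in> Hs" by (rule T3[OF rho_s[of "m+1", folded p_def] hyp hp])
  then show ?thesis using e by (simp add: p_def add.assoc)
qed

lemma caseC_s:
  assumes a: "3 \<le> i" "i \<le> q" "q \<le> N" "3 \<le> k" "k \<le> N"
  shows "Q (s k + Cw q i) \<in> Hs"
proof -
  have hk: "s k + s k \<in> Hs" using a Hs_ss by simp
  consider "q + 2 \<le> k" | "k = q + 1" | "k + 1 \<le> q \<and> i + 1 \<le> k" | "k + 1 \<le> i"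
    | "k = i \<and> k + 1 \<le> q" | "k = q \<and> i < q" | "k = q \<and> i = q" using a by linarith
  then show ?thesis
  proof cases
    case 1
    have c: "s k + Cw q i = Cw q i + s k" using a 1 by (intro Cw_comm) auto
    show ?thesis by (rule T1[OF rho_s rho_s c Hs_C hk]) (use a in auto)
  next
    case 2
    have "s k + Cw q i = Cw (Suc q) i" using Cw_Suc[of q i] a 2 by simp
    then show ?thesis using a 2 Hs_C[of i "Suc q"] by simp
  next
    case 3
    have c: "s k + Cw q i = Cw q i + s (k + 1)"
    proof (rule Cw_mv)
      show "s k + dn q 3 = dn q 3 + s (k + 1)" using a 3 by (intro shift_dn) auto
      show "s (k + 1) + s 2 = s 2 + s (k + 1)" using a 3 by (intro s_comm') auto
      show "s (k + 1) + t = t + s (k + 1)" using a 3 t_comm[of "k+1"] by auto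
      show "s (k + 1) + uw 3 i = uw 3 i + s (k + 1)" using a 3 by (intro comm_up) auto
    qed
    show ?thesis by (rule T1[OF rho_s rho_s c Hs_C hk]) (use a in auto)
  next
    case 4
    have c: "s k + Cw q i = Cw q i + s k"
    proof (rule Cw_mv)
      show "s k + dn q 3 = dn q 3 + s (k + 1)" using a 4 by (intro shift_dn) auto
      show "s (k + 1) + s 2 = s 2 + s (k + 1)" using a 4 by (intro s_comm') auto
      show "s (k + 1) + t = t + s (k + 1)" using a 4 t_comm[of "k+1"] by auto
      show "s (k + 1) + uw 3 i = uw 3 i + s k" using a 4 by (intro shift_up) auto
    qed
    show ?thesis by (rule T1[OF rho_s rho_s c Hs_C hk]) (use a in auto)
  next
    case 5
    define W where "W = Cw q (k - 1)"
    have eW: "Cw q i = W + s k" using 5 a up_Suc[of 3 "k - 1"]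
      by (simp add: W_def Cw_def add.assoc)
    have eW2: "W + s k + s (k + 1) = Cw q (k + 1)" using 5 a up_Suc[of 3 "k - 1"] up_Suc[of 3 k]
      by (simp add: W_def Cw_def add.assoc)
    have c: "s k + W = W + s (k + 1)" unfolding W_def
    proof (rule Cw_mv)
      show "s k + dn q 3 = dn q 3 + s (k + 1)" using a 5 by (intro shift_dn) auto
      show "s (k + 1) + s 2 = s 2 + s (k + 1)" using a 5 by (intro s_comm') auto
      show "s (k + 1) + t = t + s (k + 1)" using a 5 t_comm[of "k+1"] by auto
      show "s (k + 1) + uw 3 (k - 1) = uw 3 (k - 1) + s (k + 1)" using a 5 by (intro comm_up) auto
    qed
    have br: "s (k + 1) + s k + s (k + 1) = s k + s (k + 1) + s k"
      using s_braid[of k] a 5 by simp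
    have k1: "2 \<le> k - 1" "k - 1 \<le> q" using a 5 by auto
    have h0: "Q W \<in> Hs" unfolding W_def by (rule Hs_Cw[OF k1 a(3)])
    have h1: "Q (W + s k) \<in> Hs" using Hs_C[of i q] a eW by simp
    have h2: "Q (W + s k + s (k + 1)) \<in> Hs" using Hs_C[of "k + 1" q] a 5 eW2 by simp
    show ?thesis unfolding eW by (rule S1'[OF rho_s rho_s br c h0 h1 h2 hk])
  next
    case 6
    have q2: "2 \<le> q - 1" using a 6 by auto
    have e: "Cw q i = s q + Cw (q - 1) i" using Cw_Suc[OF q2, of i] q2 by simp
    have "Q (s q + (s q + Cw (q - 1) i)) \<in> Hs"
      by (intro T3[OF rho_s Hs_C]) (use a 6 Hs_ss in auto)
    then show ?thesis using e 6 by simp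
  next
    case 7
    have "Q (s (q - 1 + 1) + Cw (q - 1 + 1) (q - 1 + 1)) \<in> Hs" using a 7 by (intro S6) auto
    then show ?thesis using a 7 by simp
  qed
qed


definition lett :: "'g set" where "lett = {s k | k. 2 \<le> k \<and> k \<le> N} \<union> {t}"

lemma lett_rho: "x \<in> lett \<Longrightarrow> rho x = x"
  by (auto simp: lett_def rho_s rho_t)
lemma lett_sq: "x \<in> lett \<Longrightarrow> x + x \<in> Hs"
  by (auto simp: lett_def Hs_ss Hs_tt)

lemma good_conj: "rho x = x \<Longrightarrow> x + x \<in> Hs \<Longrightarrow> Q (x + g) \<in> Hs \<Longrightarrow> x + Q g - x \<in> Hs"
proof -
  assume r: "rho x = x" and hx: "x + x \<in> Hs" and hg: "Q (x + g) \<in> Hs"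
  have "x + Q g - x = Q (x + g) - (x + x)" by (simp only: Q_add Q_fix[OF r] gs)
  then show ?thesis using hg hx by (simp only:) (rule Hs_diff)
qed

lemma gen_conj:
  assumes x: "x \<in> lett" and g: "g \<in> gens"
  shows "x + g - x \<in> Hs"
proof -
  have r: "rho x = x" and hx: "x + x \<in> Hs" using x lett_rho lett_sq by auto
  from g consider (A) q i where "g = Q (dn q i)" "2 \<le> i" "i \<le> q" "q \<le> N"
    | (B) q where "g = Q (dn q 3 + t)" "2 \<le> q" "q \<le> N"
    | (C) q i where "g = Q (Cw q i)" "3 \<le> i" "i \<le> q" "q \<le> N"
    unfolding gens_def by blast
  then show ?thesis
  proof cases
    case (A q i)
    have "Q (x + dn q i) \<in> Hs" using x A caseA_s caseA_t unfolding lett_def by auto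
    then show ?thesis using A good_conj[OF r hx] by simp
  next
    case (B q)
    have "Q (x + (dn q 3 + t)) \<in> Hs" using x B caseB_s caseB_t unfolding lett_def by auto
    then show ?thesis using B good_conj[OF r hx] by simp
  next
    case (C q i)
    have "Q (x + Cw q i) \<in> Hs"
    proof -
      from x consider (s) k where "x = s k" "2 \<le> k" "k \<le> N" | (t) "x = t" unfolding lett_def by blast
      then show ?thesis
      proof cases
        case s
        then show ?thesis using C caseC_s[of i q k] caseC_s2[of i q] by (cases "k = 2") auto
      next
        case t then show ?thesis using C caseC_t by auto
      qed
    qed
    then show ?thesis using C good_conj[OF r hx] by simp
  qed
qed

lemma conj_Hs: "x \<in> lett \<Longrightarrow> h \<in> Hs \<Longrightarrow> x + h - x \<in> Hs"
proof -
  assume x: "x \<in> lett"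
  assume "h \<in> Hs"
  then show "x + h - x \<in> Hs"
  proof (induction h rule: Hs.induct)
    case (gen g) then show ?case using gen_conj[OF x] by simp
  next
    case zero then show ?case by (simp add: Hs.zero)
  next
    case (add a b)
    have "x + (a + b) - x = (x + a - x) + (x + b - x)" by (rule conj_add)
    then show ?case using add by (simp only:) (rule Hs.add)
  next
    case (neg a)
    have "x + (- a) - x = - (x + a - x)" by (rule conj_neg)
    then show ?case using neg by (simp only:) (rule Hs.neg)
  qed
qed

lemma conj_Hs_neg: "x \<in> lett \<Longrightarrow> h \<in> Hs \<Longrightarrow> - x + h + x \<in> Hs"
proof -
  assume x: "x \<in> lett" and h: "h \<in> Hs"
  have "- x + h + x = - (x + x) + (x + h - x) + (x + x)" by (simp only: gs)
  then show ?thesis using conj_Hs[OF x h] lett_sq[OF x] by (simp only:) (intro conj_Hs[OF x h] lett_sq[OF x] Hs.add Hs.neg)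
qed

end


definition filt :: "nat \<Rightarrow> dword \<Rightarrow> dword" where
  "filt m w = filter (\<lambda>x. valid_gen m (fst x)) w"

lemma filt_app[simp]: "filt m (u @ v) = filt m u @ filt m v" by (simp add: filt_def)
lemma filt_rev: "filt m (rev u) = rev (filt m u)" by (simp add: filt_def rev_filter)
lemma filt_inv: "filt m (inv_word u) = inv_word (filt m u)"
  by (induction u) (auto simp: filt_def inv_word_def)
lemma filt_valid: "valid_word m (filt m u)" by (auto simp: filt_def valid_word_def)
lemma filt_id: "valid_word m u \<Longrightarrow> filt m u = u"
  by (auto simp: filt_def valid_word_def intro: filter_True)
lemma filt_nil[simp]: "filt m [] = []" by (simp add: filt_def)

lemma adj_sym: "adj n g h = adj n h g" by (auto simp: adj_def insert_commute)

lemma drel_rev: "drel c n u v \<Longrightarrow> drel c n (rev u) (rev v)"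
proof (induction rule: drel.induct)
  case (refl w) then show ?case by (rule drel.refl)
next
  case (sym u v) then show ?case using drel.sym by blast
next
  case (trans u v w) then show ?case using drel.trans by blast
next
  case (ctxt u v p q) then show ?case using drel.ctxt[OF ctxt.IH, of "rev q" "rev p"] by simp
next
  case (free g b) then show ?case using drel.free[where c=c and n=n and g=g and b="\<not> b"] by simp
next
  case (comm g h) then show ?case using drel.comm[where c=c and n=n and g=h and h=g] by (simp add: adj_sym)
next
  case (braid g h) then show ?case using drel.braid[where c=c and n=n and g=g and h=h] by simp
next
  case (invol g) then show ?case using drel.invol[where c=c and n=n and g=g] by simp
qed

lemma inv_word_Cons: "inv_word (a # x) = inv_word x @ [(fst a, \<not> snd a)]"
  by (cases a) (simp add: inv_word_def)
lemma inv_word_app: "inv_word (x @ y) = inv_word y @ inv_word x"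
  by (simp add: inv_word_def)
lemma inv_inv[simp]: "inv_word (inv_word x) = x"
  by (simp add: inv_word_def rev_map o_def case_prod_beta)
lemma valid_inv: "valid_word n (inv_word x) = valid_word n x"
  by (auto simp: valid_word_def inv_word_def)
lemma valid_app[simp]: "valid_word n (x @ y) = (valid_word n x \<and> valid_word n y)"
  by (auto simp: valid_word_def)
lemma inv_nil[simp]: "inv_word [] = []" by (simp add: inv_word_def)

lemma drel_app: "drel c n u u' \<Longrightarrow> drel c n v v' \<Longrightarrow> drel c n (u @ v) (u' @ v')"
proof -
  assume a: "drel c n u u'" and b: "drel c n v v'"
  have "drel c n ([] @ u @ v) ([] @ u' @ v)" by (rule drel.ctxt[OF a])
  moreover have "drel c n (u' @ v @ []) (u' @ v' @ [])" by (rule drel.ctxt[OF b])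
  ultimately show ?thesis by (auto intro: drel.trans)
qed

lemma free_inv: "valid_word n x \<Longrightarrow> drel c n (x @ inv_word x) []"
proof (induction x)
  case Nil then show ?case by (simp add: drel.refl)
next
  case (Cons a x)
  obtain g e where a: "a = (g, e)" by (cases a)
  have vg: "valid_gen n g" using Cons.prems a by (simp add: valid_word_def)
  have vx: "valid_word n x" using Cons.prems by (simp add: valid_word_def)
  have "drel c n ([a] @ (x @ inv_word x) @ [(g, \<not> e)]) ([a] @ [] @ [(g, \<not> e)])"
    by (rule drel.ctxt[OF Cons.IH[OF vx]])
  moreover have "drel c n [(g, e), (g, \<not> e)] []" by (rule drel.free[OF vg])
  ultimately show ?case using a by (auto simp: inv_word_Cons intro: drel.trans)
qed

lemma free_inv2: "valid_word n x \<Longrightarrow> drel c n (inv_word x @ x) []"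
  using free_inv[where n=n and x="inv_word x" and c=c] by (simp add: valid_inv)

lemma drel_inv: "valid_word n x \<Longrightarrow> valid_word n y \<Longrightarrow> drel c n x y \<Longrightarrow> drel c n (inv_word x) (inv_word y)"
proof -
  assume vx: "valid_word n x" and vy: "valid_word n y" and xy: "drel c n x y"
  have 1: "drel c n (inv_word x @ []) (inv_word x @ (y @ inv_word y))"
    by (rule drel_app[OF drel.refl drel.sym[OF free_inv[OF vy]]])
  have 2: "drel c n (inv_word x @ (y @ inv_word y)) (inv_word x @ (x @ inv_word y))"
    by (rule drel_app[OF drel.refl drel_app[OF drel.sym[OF xy] drel.refl]])
  have 3: "drel c n ((inv_word x @ x) @ inv_word y) ([] @ inv_word y)"
    by (rule drel_app[OF free_inv2[OF vx] drel.refl])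
  show ?thesis using 1 2 3 by (auto intro: drel.trans)
qed

definition brel :: "(nat \<Rightarrow> dword) \<Rightarrow> (nat \<Rightarrow> dword) \<Rightarrow> bool" where
  "brel f g = (\<forall>m. drel False m (filt m (f m)) (filt m (g m)))"

lemma brel_equivp: "equivp brel"
proof (rule equivpI)
  show "reflp brel" by (auto simp: reflp_def brel_def intro: drel.refl)
  show "symp brel" by (auto simp: symp_def brel_def intro: drel.sym)
  show "transp brel" by (auto simp: transp_def brel_def intro: drel.trans)
qed

quotient_type bg = "nat \<Rightarrow> dword" / brel
  by (rule brel_equivp)

instantiation bg :: group_add
begin
lift_definition zero_bg :: bg is "\<lambda>m. []" .
lift_definition plus_bg :: "bg \<Rightarrow> bg \<Rightarrow> bg" is "\<lambda>f g m. f m @ g m"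
  by (auto simp: brel_def intro: drel_app)
lift_definition uminus_bg :: "bg \<Rightarrow> bg" is "\<lambda>f m. inv_word (f m)"
  by (auto simp: brel_def filt_inv intro: drel_inv filt_valid)
lift_definition minus_bg :: "bg \<Rightarrow> bg \<Rightarrow> bg" is "\<lambda>f g m. f m @ inv_word (g m)"
  by (auto simp: brel_def filt_inv intro!: drel_app drel_inv filt_valid)
instance
proof
  fix a b c :: bg
  show "a + b + c = a + (b + c)" by transfer (auto simp: brel_def intro: drel.refl)
  show "0 + a = a" by transfer (auto simp: brel_def intro: drel.refl)
  show "a + 0 = a" by transfer (auto simp: brel_def intro: drel.refl)
  show "- a + a = 0" by transfer (auto simp: brel_def filt_inv intro: free_inv2 filt_valid)
  show "a + - b = a - b" by transfer (auto simp: brel_def intro: drel.refl)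
qed
end

lift_definition emb :: "nat \<Rightarrow> dword \<Rightarrow> bg" is "\<lambda>N w m. if m = N then w else []" .
lift_definition rhob :: "bg \<Rightarrow> bg" is "\<lambda>f m. rev (f m)"
  by (auto simp: brel_def filt_rev intro: drel_rev)

lemma emb_app: "emb N (u @ v) = emb N u + emb N v"
  by transfer (auto simp: brel_def intro: drel.refl)
lemma emb_nil: "emb N [] = 0"
  by transfer (auto simp: brel_def intro: drel.refl)
lemma emb_inv: "emb N (inv_word u) = - emb N u"
  by transfer (auto simp: brel_def intro: drel.refl)
lemma emb_eq: "(emb N u = emb N v) = drel False N (filt N u) (filt N v)"
  by transfer (auto simp: brel_def intro: drel.refl)
lemma rhob_add: "rhob (a + b) = rhob b + rhob a"
  by transfer (auto simp: brel_def intro: drel.refl)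
lemma rhob_emb: "rhob (emb N w) = emb N (rev w)"
  by transfer (auto simp: brel_def intro: drel.refl)


definition SS :: "nat \<Rightarrow> nat \<Rightarrow> bg" where "SS N k = emb N [(Y k, False)]"
definition TT :: "nat \<Rightarrow> bg" where "TT N = emb N [(Y2', False)]"

lemma emb_rel: "valid_word N u \<Longrightarrow> valid_word N v \<Longrightarrow> drel False N u v \<Longrightarrow> emb N u = emb N v"
  by (simp add: emb_eq filt_id)

lemma emb2: "emb N [a] + emb N [b] = emb N [a, b]" using emb_app[of N "[a]" "[b]"] by simp
lemma emb3: "emb N [a] + emb N [b] + emb N [c] = emb N [a, b, c]"
  using emb_app[of N "[a]" "[b]"] emb_app[of N "[a, b]" "[c]"] by simp

lemma dbr_inst: "4 \<le> N \<Longrightarrow> dbr N (SS N) (TT N) rhob"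
proof (unfold_locales)
  assume N: "4 \<le> N"
  show "4 \<le> N" by (rule N)
  fix k l :: nat and x y :: bg
  show "\<lbrakk>2 \<le> k; l \<le> N; k + 2 \<le> l\<rbrakk> \<Longrightarrow> SS N k + SS N l = SS N l + SS N k"
  proof -
    assume a: "2 \<le> k" "l \<le> N" "k + 2 \<le> l"
    have na: "\<not> adj N (Y k) (Y l)" using a by (auto simp: adj_def doubleton_eq_iff)
    have "drel False N [(Y k, False), (Y l, False)] [(Y l, False), (Y k, False)]"
      using a na by (intro drel.comm) (auto simp: valid_gen_def)
    then show ?thesis unfolding SS_def emb2 using a
      by (intro emb_rel) (auto simp: valid_word_def valid_gen_def)
  qed
  show "\<lbrakk>2 \<le> k; k + 1 \<le> N\<rbrakk> \<Longrightarrow> SS N k + SS N (k + 1) + SS N k = SS N (k + 1) + SS N k + SS N (k + 1)"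
  proof -
    assume a: "2 \<le> k" "k + 1 \<le> N"
    have ad: "adj N (Y k) (Y (k + 1))"
    proof (cases "k = 2")
      case True then show ?thesis using a by (auto simp: adj_def)
    next
      case False
      show ?thesis unfolding adj_def using a False by (intro conjI disjI2 exI[of _ k]) auto
    qed
    have "drel False N [(Y k, False), (Y (k+1), False), (Y k, False)] [(Y (k+1), False), (Y k, False), (Y (k+1), False)]"
      using ad by (rule drel.braid)
    then show ?thesis unfolding SS_def emb3 using a
      by (intro emb_rel) (auto simp: valid_word_def valid_gen_def)
  qed
  show "\<lbrakk>2 \<le> k; k \<le> N; k \<noteq> 3\<rbrakk> \<Longrightarrow> TT N + SS N k = SS N k + TT N"
  proof -
    assume a: "2 \<le> k" "k \<le> N" "k \<noteq> 3"
    have na: "\<not> adj N Y2' (Y k)" using a by (auto simp: adj_def doubleton_eq_iff)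
    have "drel False N [(Y2', False), (Y k, False)] [(Y k, False), (Y2', False)]"
      using a na by (intro drel.comm) (auto simp: valid_gen_def)
    then show ?thesis unfolding SS_def TT_def emb2 using a
      by (intro emb_rel) (auto simp: valid_word_def valid_gen_def)
  qed
  show "TT N + SS N 3 + TT N = SS N 3 + TT N + SS N 3"
  proof -
    have ad: "adj N Y2' (Y 3)" using N by (auto simp: adj_def)
    have "drel False N [(Y2', False), (Y 3, False), (Y2', False)] [(Y 3, False), (Y2', False), (Y 3, False)]"
      using ad by (rule drel.braid)
    then show ?thesis unfolding SS_def TT_def emb3 using N
      by (intro emb_rel) (auto simp: valid_word_def valid_gen_def)
  qed
  show "rhob (x + y) = rhob y + rhob x" by (rule rhob_add)
  show "rhob (SS N k) = SS N k" by (simp add: SS_def rhob_emb)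
  show "rhob (TT N) = TT N" by (simp add: TT_def rhob_emb)
qed


lemma emb_Cons: "emb N (a # w) = emb N [a] + emb N w"
  using emb_app[of N "[a]" w] by simp

lemma emb_map: "emb N (map (\<lambda>k. (Y k, False)) xs) = sum_list (map (SS N) xs)"
proof (induction xs)
  case Nil then show ?case by (simp add: emb_nil)
next
  case (Cons x xs)
  have "emb N (map (\<lambda>k. (Y k, False)) (x # xs)) = emb N ([(Y x, False)] @ map (\<lambda>k. (Y k, False)) xs)"
    by simp
  also have "... = SS N x + emb N (map (\<lambda>k. (Y k, False)) xs)" by (simp only: emb_app SS_def)
  finally show ?case using Cons by simp
qed

lemma inv_concat: "inv_word (concat ws) = concat (map inv_word (rev ws))"
  by (induction ws) (simp_all add: inv_word_app)

abbreviation GG :: "nat \<Rightarrow> dword set" where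
  "GG N \<equiv> pure_gens N \<union> inv_word ` pure_gens N"

lemma Hs_words:
  assumes N: "4 \<le> N" and h: "h \<in> dbr.Hs N (SS N) (TT N) rhob"
  shows "\<exists>ws. set ws \<subseteq> GG N \<and> h = emb N (concat ws)"
proof -
  interpret I: dbr N "SS N" "TT N" rhob by (rule dbr_inst[OF N])
  have dn: "I.dn j i = emb N (down j i)" for j i
    unfolding I.dn_def down_def Defs.up_def by (simp add: emb_map rev_map)
  have upe: "I.uw i j = emb N (Defs.up i j)" for j i
    unfolding I.uw_def Defs.up_def by (simp add: emb_map)
  have Qe: "I.Q (emb N w) = emb N (w @ rev w)" for w
    by (simp add: I.Q_def rhob_emb emb_app)
  have rdown: "rev (down j i) = Defs.up i j" for i j by (simp add: down_def)
  have rup: "rev (Defs.up i j) = down j i" for i j by (simp add: down_def)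
  have gw: "\<exists>w \<in> pure_gens N. g = emb N w" if g: "g \<in> I.gens" for g
  proof -
    from g consider (A) q i where "g = I.Q (I.dn q i)" "2 \<le> i" "i \<le> q" "q \<le> N"
      | (B) q where "g = I.Q (I.dn q 3 + TT N)" "2 \<le> q" "q \<le> N"
      | (C) q i where "g = I.Q (I.Cw q i)" "3 \<le> i" "i \<le> q" "q \<le> N"
      unfolding I.gens_def by blast
    then show ?thesis
    proof cases
      case (A q i)
      have "g = emb N (a_gen q i)" using A by (simp add: dn Qe a_gen_def rdown)
      moreover have "a_gen q i \<in> pure_gens N" using A unfolding pure_gens_def by blast
      ultimately show ?thesis by blast
    next
      case (B q)
      have e: "I.dn q 3 + TT N = emb N (down q 3 @ [(Y2', False)])" by (simp add: dn TT_def emb_app)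
      have g': "g = emb N (down q 3 @ [(Y2', False), (Y2', False)] @ Defs.up 3 q)"
        using B by (simp add: e Qe rdown)
      show ?thesis
      proof (cases "q = 2")
        case True
        have "down q 3 @ [(Y2', False), (Y2', False)] @ Defs.up 3 q = [(Y2', False), (Y2', False)]"
          using True by (simp add: down_def Defs.up_def)
        moreover have "[(Y2', False), (Y2', False)] \<in> pure_gens N" unfolding pure_gens_def by blast
        ultimately show ?thesis using g' by auto
      next
        case False
        have "a2'_gen q \<in> pure_gens N" using B False unfolding pure_gens_def by auto
        then show ?thesis using g' by (auto simp: a2'_gen_def)
      qed
    next
      case (C q i)
      have e: "I.Cw q i = emb N (down q 3 @ [(Y 2, False), (Y2', False)] @ Defs.up 3 i)"
        unfolding I.Cw_def unfolding dn upe TT_def SS_def by (simp add: emb_app[symmetric])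
      have "g = emb N (b_gen q i)" using C by (simp add: e Qe rdown rup b_gen_def)
      moreover have "b_gen q i \<in> pure_gens N" using C unfolding pure_gens_def by blast
      ultimately show ?thesis by blast
    qed
  qed
  from h show ?thesis
  proof (induction h rule: I.Hs.induct)
    case (gen g)
    then obtain w where "w \<in> pure_gens N" "g = emb N w" using gw by blast
    then show ?case by (intro exI[of _ "[w]"]) auto
  next
    case zero then show ?case by (intro exI[of _ "[]"]) (simp add: emb_nil)
  next
    case (add a b)
    then obtain wa wb where "set wa \<subseteq> GG N" "a = emb N (concat wa)" "set wb \<subseteq> GG N" "b = emb N (concat wb)"
      by blast
    then show ?case by (intro exI[of _ "wa @ wb"]) (simp add: emb_app)
  next
    case (neg a)
    then obtain wa where w: "set wa \<subseteq> GG N" "a = emb N (concat wa)" by blast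
    have "set (map inv_word (rev wa)) \<subseteq> GG N" using w(1) by auto
    moreover have "- a = emb N (concat (map inv_word (rev wa)))"
      using w(2) by (simp add: emb_inv[symmetric] inv_concat)
    ultimately show ?case by blast
  qed
qed


lemma filt_filt: "filt m (filt m u) = filt m u" by (simp add: filt_def)
lemma emb_filt: "emb N (filt N u) = emb N u" by (simp add: emb_eq filt_filt drel.refl)

lemma adj_valid: "adj n g h \<Longrightarrow> valid_gen n g \<and> valid_gen n h"
  by (auto simp: adj_def valid_gen_def doubleton_eq_iff)

lemma conj_word:
  assumes N: "4 \<le> N" and p: "valid_word N p" and h: "h \<in> dbr.Hs N (SS N) (TT N) rhob"
  shows "emb N p + h - emb N p \<in> dbr.Hs N (SS N) (TT N) rhob"
  using p
proof (induction p)
  case Nil then show ?case using h by (simp add: emb_nil)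
next
  case (Cons a p)
  interpret I: dbr N "SS N" "TT N" rhob by (rule dbr_inst[OF N])
  obtain g e where a: "a = (g, e)" by (cases a)
  have vg: "valid_gen N g" using Cons.prems a by (simp add: valid_word_def)
  have vp: "valid_word N p" using Cons.prems by (simp add: valid_word_def)
  have ih: "emb N p + h - emb N p \<in> I.Hs" using Cons.IH[OF vp] .
  have x: "emb N [(g, False)] \<in> I.lett" using vg
    unfolding I.lett_def by (cases g) (auto simp: valid_gen_def SS_def TT_def)
  have ea: "emb N (a # p) = emb N [a] + emb N p" using emb_app[of N "[a]" p] by simp
  have e1: "emb N (a # p) + h - emb N (a # p) = emb N [a] + (emb N p + h - emb N p) - emb N [a]"
    by (simp only: ea gs)
  show ?case
  proof (cases e)
    case False
    then show ?thesis unfolding e1 using I.conj_Hs[OF x ih] a by simp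
  next
    case True
    have ai: "emb N [a] = - emb N [(g, False)]" using emb_inv[of N "[(g, False)]"] a True
      by (simp add: inv_word_def)
    have "emb N [a] + (emb N p + h - emb N p) - emb N [a]
        = - emb N [(g, False)] + (emb N p + h - emb N p) + emb N [(g, False)]"
      by (simp only: ai gs)
    then show ?thesis unfolding e1 using I.conj_Hs_neg[OF x ih] by simp
  qed
qed

lemma weyl_Hs:
  assumes N: "4 \<le> N" and r: "drel True N u v"
  shows "emb N u - emb N v \<in> dbr.Hs N (SS N) (TT N) rhob"
  using r
proof (induction rule: drel.induct)
  interpret I: dbr N "SS N" "TT N" rhob by (rule dbr_inst[OF N])
  case (refl w) then show ?case by (simp add: I.Hs.zero)
next
  interpret I: dbr N "SS N" "TT N" rhob by (rule dbr_inst[OF N])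
  case (sym u v)
  have "- (emb N u - emb N v) \<in> I.Hs" by (rule I.Hs.neg[OF sym.IH])
  then show ?case by (simp only: minus_diff_eq)
next
  interpret I: dbr N "SS N" "TT N" rhob by (rule dbr_inst[OF N])
  case (trans u v w)
  have "emb N u - emb N w = (emb N u - emb N v) + (emb N v - emb N w)" by (simp only: gs)
  then show ?case using trans I.Hs.add by simp
next
  interpret I: dbr N "SS N" "TT N" rhob by (rule dbr_inst[OF N])
  case (ctxt u v p q)
  have "emb N (p @ u @ q) - emb N (p @ v @ q) = emb N p + (emb N u - emb N v) - emb N p"
    by (simp only: emb_app gs)
  also have "... = emb N (filt N p) + (emb N u - emb N v) - emb N (filt N p)"
    by (simp only: emb_filt)
  finally show ?case using conj_word[OF N filt_valid ctxt.IH] by simp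
next
  interpret I: dbr N "SS N" "TT N" rhob by (rule dbr_inst[OF N])
  case (free g b)
  have "emb N [(g, b), (g, \<not> b)] = emb N []"
    using free by (intro emb_rel drel.free) (auto simp: valid_word_def)
  then show ?case by (simp add: I.Hs.zero)
next
  interpret I: dbr N "SS N" "TT N" rhob by (rule dbr_inst[OF N])
  case (comm g h)
  have "emb N [(g, False), (h, False)] = emb N [(h, False), (g, False)]"
    using comm by (intro emb_rel drel.comm) (auto simp: valid_word_def)
  then show ?case by (simp add: I.Hs.zero)
next
  interpret I: dbr N "SS N" "TT N" rhob by (rule dbr_inst[OF N])
  case (braid g h)
  have "emb N [(g, False), (h, False), (g, False)] = emb N [(h, False), (g, False), (h, False)]"
    using braid adj_valid[OF braid] by (intro emb_rel drel.braid) (auto simp: valid_word_def)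
  then show ?case by (simp add: I.Hs.zero)
next
  interpret I: dbr N "SS N" "TT N" rhob by (rule dbr_inst[OF N])
  case (invol g)
  have x: "emb N [(g, False)] \<in> I.lett" using invol
    unfolding I.lett_def by (cases g) (auto simp: valid_gen_def SS_def TT_def)
  have "emb N [(g, False), (g, False)] - emb N [] = emb N [(g, False)] + emb N [(g, False)]"
    using emb_app[of N "[(g, False)]" "[(g, False)]"] by (simp add: emb_nil)
  then show ?case using I.lett_sq[OF x] by simp
qed

lemma pal: "(\<forall>x\<in>set u. snd x = False) \<Longrightarrow> valid_word n u \<Longrightarrow> drel True n (u @ rev u) []"
proof (induction u)
  case Nil then show ?case by (simp add: drel.refl)
next
  case (Cons a u)
  obtain g where a: "a = (g, False)" using Cons.prems by (cases a) auto
  have vg: "valid_gen n g" using Cons.prems a by (simp add: valid_word_def)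
  have 1: "drel True n ([a] @ (u @ rev u) @ [a]) ([a] @ [] @ [a])"
    by (rule drel.ctxt) (use Cons in \<open>auto simp: valid_word_def\<close>)
  have 2: "drel True n [(g, False), (g, False)] []" by (rule drel.invol[OF _ vg]) simp
  show ?case using 1 2 a by (auto intro: drel.trans)
qed

lemma valid_down: "2 \<le> i \<Longrightarrow> j \<le> n \<Longrightarrow> valid_word n (down j i)"
  by (auto simp: down_def Defs.up_def valid_word_def valid_gen_def)
lemma valid_up: "2 \<le> i \<Longrightarrow> j \<le> n \<Longrightarrow> valid_word n (Defs.up i j)"
  by (auto simp: Defs.up_def valid_word_def valid_gen_def)
lemma pos_down: "\<forall>x\<in>set (down j i). snd x = False" by (auto simp: down_def Defs.up_def)
lemma pos_up: "\<forall>x\<in>set (Defs.up i j). snd x = False" by (auto simp: Defs.up_def)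

lemma gens_pal:
  assumes "4 \<le> n" "g \<in> pure_gens n"
  shows "\<exists>u. g = u @ rev u \<and> valid_word n u \<and> (\<forall>x\<in>set u. snd x = False)"
  using assms unfolding pure_gens_def
proof (elim UnE CollectE exE conjE)
  fix i j assume a: "g = a_gen j i" "2 \<le> i" "i \<le> j" "j \<le> n"
  show ?thesis using a valid_down[of i j n] pos_down[of j i]
    by (intro exI[of _ "down j i"]) (simp add: a_gen_def down_def)
next
  assume "g \<in> {[(Y2', False), (Y2', False)]}"
  then show ?thesis by (intro exI[of _ "[(Y2', False)]"]) (auto simp: valid_word_def valid_gen_def)
next
  fix j assume a: "g = a2'_gen j" "3 \<le> j" "j \<le> n"
  show ?thesis using a valid_down[of 3 j n] pos_down[of j 3]
    by (intro exI[of _ "down j 3 @ [(Y2', False)]"])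
       (auto simp: a2'_gen_def down_def valid_word_def valid_gen_def)
next
  fix i j assume a: "g = b_gen j i" "3 \<le> i" "i \<le> j" "j \<le> n"
  show ?thesis using a valid_down[of 3 j n] pos_down[of j 3] valid_up[of 3 i n] pos_up[of 3 i] assms(1)
    by (intro exI[of _ "down j 3 @ [(Y 2, False), (Y2', False)] @ Defs.up 3 i"])
       (auto simp: b_gen_def down_def valid_word_def valid_gen_def)
qed


lemma GG_valid: "4 \<le> n \<Longrightarrow> g \<in> GG n \<Longrightarrow> valid_word n g"
proof -
  assume n: "4 \<le> n" and g: "g \<in> GG n"
  have v: "valid_word n h" if hh: "h \<in> pure_gens n" for h
  proof -
    obtain u where "h = u @ rev u" "valid_word n u" using gens_pal[OF n hh] by blast
    then show ?thesis by (auto simp: valid_word_def)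
  qed
  from g show ?thesis using v by (auto simp: valid_inv)
qed

theorem proposition3p8:
  fixes n :: nat
  assumes "4 \<le> n"
  shows "(\<forall>g \<in> pure_gens n. weyl_eq n g [])
       \<and> (\<forall>w. valid_word n w \<and> weyl_eq n w [] \<longrightarrow>
            (\<exists>ws. set ws \<subseteq> pure_gens n \<union> inv_word ` pure_gens n
                  \<and> br_eq n w (concat ws)))"
proof (intro conjI ballI allI impI)
  fix g assume g: "g \<in> pure_gens n"
  obtain u where "g = u @ rev u" "valid_word n u" "\<forall>x\<in>set u. snd x = False"
    using gens_pal[OF assms g] by blast
  then show "weyl_eq n g []" using pal by simp
next
  fix w assume w: "valid_word n w \<and> weyl_eq n w []"
  have "emb n w - emb n [] \<in> dbr.Hs n (SS n) (TT n) rhob" using weyl_Hs[OF assms] w by blast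
  hence "emb n w \<in> dbr.Hs n (SS n) (TT n) rhob" by (simp add: emb_nil)
  then obtain ws where ws: "set ws \<subseteq> GG n" "emb n w = emb n (concat ws)"
    using Hs_words[OF assms] by blast
  have vc: "valid_word n (concat ws)" using ws(1) GG_valid[OF assms] by (auto simp: valid_word_def)
  have "br_eq n (filt n w) (filt n (concat ws))" using ws(2) by (simp add: emb_eq)
  then have "br_eq n w (concat ws)" using w vc by (simp add: filt_id)
  then show "\<exists>ws. set ws \<subseteq> pure_gens n \<union> inv_word ` pure_gens n \<and> br_eq n w (concat ws)"
    using ws(1) by blast
qed

end
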